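(* Let $S$ be a semigroup with finite $\mathcal{R}$-height, and let $A$ be a left ideal of $S$ such that every element of $A$ is a regular element of $S$. Then $\mathrm{H}_{\mathcal{R}}(A)=n$, where $n$ is the maximal length of a chain of $\mathcal{R}$-classes of $S$ each of which intersects $A$.
   Context: An element $a\in S$ is regular if $a=aba$ for some $b\in S$. For a semigroup $S$, $S^1$ denotes $S$ with an identity adjoined if necessary. Green's preorder: $a\leq_{\mathcal{R}} b$ iff $aS^1\subseteq bS^1$; $\mathcal{R}$ is the associated equivalence. $\mathcal{R}$-classes are ordered by $R_a\leq R_b$ iff $a\leq_{\mathcal{R}} b$, and the $\mathcal{R}$-height $\mathrm{H}_{\mathcal{R}}$ is the supremum of the cardinalities of chains of $\mathcal{R}$-classes. A left ideal is a non-empty subset $A$ with $SA\subseteq A$; $\mathrm{H}_{\mathcal{R}}(A)$ is computed in the semigroup $A$ itself. *)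

theory Defs
  imports Main "HOL-Library.Extended_Nat"
begin

text \<open>Green's R-relation, relativised to a subsemigroup with carrier M
  (the multiplication is the ambient one). M^1-principal right ideal: aM^1 = {a} \<union> aM.\<close>

definition rideal :: "'a::semigroup_mult set \<Rightarrow> 'a \<Rightarrow> 'a set" where
  "rideal M a = insert a ((\<lambda>x. a * x) ` M)"

definition leq_R :: "'a::semigroup_mult set \<Rightarrow> 'a \<Rightarrow> 'a \<Rightarrow> bool" where
  "leq_R M a b \<longleftrightarrow> rideal M a \<subseteq> rideal M b"

definition Rclass :: "'a::semigroup_mult set \<Rightarrow> 'a \<Rightarrow> 'a set" where
  "Rclass M a = {b \<in> M. leq_R M a b \<and> leq_R M b a}"

definition Rclasses :: "'a::semigroup_mult set \<Rightarrow> 'a set set" where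
  "Rclasses M = Rclass M ` M"

definition Rclass_le :: "'a::semigroup_mult set \<Rightarrow> 'a set \<Rightarrow> 'a set \<Rightarrow> bool" where
  "Rclass_le M X Y \<longleftrightarrow> (\<exists>a\<in>X. \<exists>b\<in>Y. leq_R M a b)"

definition Rchain :: "'a::semigroup_mult set \<Rightarrow> 'a set set \<Rightarrow> bool" where
  "Rchain M C \<longleftrightarrow> C \<subseteq> Rclasses M \<and> (\<forall>X\<in>C. \<forall>Y\<in>C. Rclass_le M X Y \<or> Rclass_le M Y X)"

text \<open>R-height: supremum of the cardinalities of chains of R-classes
  (infinite chains contain arbitrarily large finite subchains, so finite chains suffice).\<close>
definition R_height :: "'a::semigroup_mult set \<Rightarrow> enat" where
  "R_height M = (SUP C\<in>{C. Rchain M C \<and> finite C}. enat (card C))"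

definition left_ideal :: "'a::semigroup_mult set \<Rightarrow> bool" where
  "left_ideal A \<longleftrightarrow> A \<noteq> {} \<and> (\<forall>s. \<forall>a\<in>A. s * a \<in> A)"

definition regular :: "'a::semigroup_mult \<Rightarrow> bool" where
  "regular a \<longleftrightarrow> (\<exists>b. a = a * b * a)"

end

theory Submission
  imports Defs
begin

lemma leqR_refl: "leq_R M a a" unfolding leq_R_def by simp

lemma leqR_trans: "leq_R M a b \<Longrightarrow> leq_R M b c \<Longrightarrow> leq_R M a c"
  unfolding leq_R_def by blast

lemma leqR_iff:
  assumes cl: "\<And>u t. u \<in> M \<Longrightarrow> t \<in> M \<Longrightarrow> u * t \<in> M"
  shows "leq_R M a b \<longleftrightarrow> a \<in> rideal M b"
proof
  assume "leq_R M a b" thus "a \<in> rideal M b" unfolding leq_R_def rideal_def by blast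
next
  assume h: "a \<in> rideal M b"
  show "leq_R M a b" unfolding leq_R_def
  proof
    fix z assume z: "z \<in> rideal M a"
    show "z \<in> rideal M b"
    proof (cases "z = a")
      case True thus ?thesis using h by simp
    next
      case False
      then obtain t where t: "t \<in> M" "z = a * t" using z unfolding rideal_def by auto
      show ?thesis
      proof (cases "a = b")
        case True thus ?thesis using t unfolding rideal_def by auto
      next
        case False
        then obtain u where u: "u \<in> M" "a = b * u" using h unfolding rideal_def by auto
        have "z = b * (u * t)" using t u by (simp add: mult.assoc)
        moreover have "u * t \<in> M" using cl t u by blast
        ultimately show ?thesis unfolding rideal_def by blast
      qed
    qed
  qed
qed

lemma key:
  assumes li: "left_ideal A" and reg: "\<forall>a\<in>A. regular a" and a: "a \<in> A" and b: "b \<in> A"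
  shows "leq_R A a b \<longleftrightarrow> leq_R UNIV a b"
proof -
  have clA: "\<And>u t. u \<in> A \<Longrightarrow> t \<in> A \<Longrightarrow> u * t \<in> A" using li unfolding left_ideal_def by blast
  have clU: "\<And>u t. u \<in> (UNIV::'a set) \<Longrightarrow> t \<in> UNIV \<Longrightarrow> u * t \<in> UNIV" by simp
  have "a \<in> rideal A b \<longleftrightarrow> a \<in> rideal UNIV b"
  proof
    assume "a \<in> rideal A b" thus "a \<in> rideal UNIV b" unfolding rideal_def by auto
  next
    assume h: "a \<in> rideal UNIV b"
    show "a \<in> rideal A b"
    proof (cases "a = b")
      case True thus ?thesis unfolding rideal_def by simp
    next
      case False
      then obtain s where s: "a = b * s" using h unfolding rideal_def by auto
      obtain x where x: "a = a * x * a" using reg a unfolding regular_def by blast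
      have "a = b * (s * x * a)" using s x by (metis mult.assoc)
      moreover have "s * x * a \<in> A" using li a unfolding left_ideal_def by blast
      ultimately show ?thesis unfolding rideal_def by blast
    qed
  qed
  moreover have "leq_R A a b = (a \<in> rideal A b)" by (rule leqR_iff[OF clA])
  moreover have "leq_R UNIV a b = (a \<in> rideal UNIV b)" by (rule leqR_iff[OF clU])
  ultimately show ?thesis by simp
qed

lemma Rclass_mem: "a \<in> M \<Longrightarrow> a \<in> Rclass M a"
  unfolding Rclass_def by (simp add: leqR_refl)

lemma Rclass_eq:
  assumes "b \<in> Rclass M a" shows "Rclass M b = Rclass M a"
  using assms unfolding Rclass_def by (auto intro: leqR_trans)

theorem proposition3p12:
  fixes A :: "'a::semigroup_mult set"
  assumes "R_height (UNIV :: 'a set) \<noteq> \<infinity>"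
    and "left_ideal A"
    and "\<forall>a\<in>A. regular a"
  shows "R_height A =
    (SUP C\<in>{C. Rchain (UNIV :: 'a set) C \<and> finite C \<and> (\<forall>X\<in>C. X \<inter> A \<noteq> {})}. enat (card C))"
proof -
  note li = assms(2) and reg = assms(3)
  have K: "\<And>a b. a \<in> A \<Longrightarrow> b \<in> A \<Longrightarrow> leq_R A a b \<longleftrightarrow> leq_R UNIV a b"
    using key[OF li reg] by blast
  have RA: "\<And>a. a \<in> A \<Longrightarrow> Rclass A a = Rclass UNIV a \<inter> A"
    unfolding Rclass_def using K by auto
  let ?S1 = "{C. Rchain A C \<and> finite C}"
  let ?S2 = "{C. Rchain (UNIV :: 'a set) C \<and> finite C \<and> (\<forall>X\<in>C. X \<inter> A \<noteq> {})}"
  have "(\<lambda>C. enat (card C)) ` ?S1 = (\<lambda>C. enat (card C)) ` ?S2"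
  proof (intro equalityI subsetI)
    fix v assume "v \<in> (\<lambda>C. enat (card C)) ` ?S1"
    then obtain C where C: "Rchain A C" "finite C" "v = enat (card C)" by auto
    define f where "f = (\<lambda>X::'a set. {b. \<exists>a\<in>X. leq_R UNIV a b \<and> leq_R UNIV b a})"
    have fX: "\<And>a. a \<in> A \<Longrightarrow> f (Rclass A a) = Rclass UNIV a"
      unfolding f_def RA Rclass_def using K by (auto intro: leqR_trans leqR_refl)
    have CX: "\<And>X. X \<in> C \<Longrightarrow> \<exists>a\<in>A. X = Rclass A a"
      using C(1) unfolding Rchain_def Rclasses_def by auto
    have inj: "inj_on f C"
    proof (rule inj_onI)
      fix X Y assume X: "X \<in> C" and Y: "Y \<in> C" and e: "f X = f Y"
      obtain a where a: "a \<in> A" "X = Rclass A a" using CX X by blast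
      obtain b where b: "b \<in> A" "Y = Rclass A b" using CX Y by blast
      have "Rclass UNIV a = Rclass UNIV b" using e a b fX by simp
      hence "a \<in> Rclass UNIV b" using Rclass_mem[of a UNIV] by simp
      hence "a \<in> Rclass A b" using RA a b by simp
      thus "X = Y" using a b Rclass_eq by metis
    qed
    have "Rchain UNIV (f ` C)"
      unfolding Rchain_def
    proof (intro conjI ballI)
      show "f ` C \<subseteq> Rclasses UNIV" using CX fX unfolding Rclasses_def by fastforce
    next
      fix X' Y' assume "X' \<in> f ` C" "Y' \<in> f ` C"
      then obtain X Y where X: "X \<in> C" "X' = f X" and Y: "Y \<in> C" "Y' = f Y" by blast
      have "Rclass_le A X Y \<or> Rclass_le A Y X" using C(1) X Y unfolding Rchain_def by blast
      moreover have "\<And>P Q. P \<in> C \<Longrightarrow> Q \<in> C \<Longrightarrow> Rclass_le A P Q \<Longrightarrow> Rclass_le UNIV (f P) (f Q)"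
      proof -
        fix P Q assume P: "P \<in> C" and Q: "Q \<in> C" and le: "Rclass_le A P Q"
        then obtain x y where xy: "x \<in> P" "y \<in> Q" "leq_R A x y" unfolding Rclass_le_def by blast
        have "P \<subseteq> A" "Q \<subseteq> A" using CX P Q unfolding Rclass_def by auto
        hence "leq_R UNIV x y" using K xy by blast
        moreover have "x \<in> f P" "y \<in> f Q" using xy unfolding f_def by (auto intro: leqR_refl)
        ultimately show "Rclass_le UNIV (f P) (f Q)" unfolding Rclass_le_def by blast
      qed
      ultimately show "Rclass_le UNIV X' Y' \<or> Rclass_le UNIV Y' X'" using X Y by blast
    qed
    moreover have "\<forall>X'\<in>f ` C. X' \<inter> A \<noteq> {}"
    proof
      fix X' assume "X' \<in> f ` C"
      then obtain X where X: "X \<in> C" "X' = f X" by blast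
      obtain a where a: "a \<in> A" "X = Rclass A a" using CX X by blast
      show "X' \<inter> A \<noteq> {}" using X a fX Rclass_mem[of a UNIV] by auto
    qed
    moreover have "card (f ` C) = card C" using inj by (simp add: card_image)
    ultimately have "f ` C \<in> ?S2" using C by simp
    moreover have "v = enat (card (f ` C))" using C \<open>card (f ` C) = card C\<close> by simp
    ultimately show "v \<in> (\<lambda>C. enat (card C)) ` ?S2" by (rule rev_image_eqI)
  next
    fix v assume "v \<in> (\<lambda>C. enat (card C)) ` ?S2"
    then obtain C where C: "Rchain UNIV C" "finite C" "\<forall>X\<in>C. X \<inter> A \<noteq> {}" "v = enat (card C)" by auto
    define g where "g = (\<lambda>X::'a set. X \<inter> A)"
    have CX: "\<And>X. X \<in> C \<Longrightarrow> \<exists>a\<in>A. X = Rclass UNIV a"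
    proof -
      fix X assume X: "X \<in> C"
      obtain c where c: "X = Rclass UNIV c" using C(1) X unfolding Rchain_def Rclasses_def by auto
      obtain a where a: "a \<in> X" "a \<in> A" using C(3) X by blast
      show "\<exists>a\<in>A. X = Rclass UNIV a" using a c Rclass_eq by metis
    qed
    have gX: "\<And>a. a \<in> A \<Longrightarrow> g (Rclass UNIV a) = Rclass A a" unfolding g_def using RA by simp
    have inj: "inj_on g C"
    proof (rule inj_onI)
      fix X Y assume X: "X \<in> C" and Y: "Y \<in> C" and e: "g X = g Y"
      obtain a where a: "a \<in> A" "X = Rclass UNIV a" using CX X by blast
      obtain b where b: "b \<in> A" "Y = Rclass UNIV b" using CX Y by blast
      have "a \<in> g X" using a Rclass_mem[of a UNIV] unfolding g_def by simp
      hence "a \<in> Y" using e unfolding g_def by simp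
      thus "X = Y" using a b Rclass_eq by metis
    qed
    have "Rchain A (g ` C)"
      unfolding Rchain_def
    proof (intro conjI ballI)
      show "g ` C \<subseteq> Rclasses A" using CX gX unfolding Rclasses_def by fastforce
    next
      fix X' Y' assume "X' \<in> g ` C" "Y' \<in> g ` C"
      then obtain X Y where X: "X \<in> C" "X' = g X" and Y: "Y \<in> C" "Y' = g Y" by blast
      have "Rclass_le UNIV X Y \<or> Rclass_le UNIV Y X" using C(1) X Y unfolding Rchain_def by blast
      moreover have "\<And>P Q. P \<in> C \<Longrightarrow> Q \<in> C \<Longrightarrow> Rclass_le UNIV P Q \<Longrightarrow> Rclass_le A (g P) (g Q)"
      proof -
        fix P Q assume P: "P \<in> C" and Q: "Q \<in> C" and le: "Rclass_le UNIV P Q"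
        then obtain x y where xy: "x \<in> P" "y \<in> Q" "leq_R UNIV x y" unfolding Rclass_le_def by blast
        obtain a where a: "a \<in> A" "P = Rclass UNIV a" using CX P by blast
        obtain b where b: "b \<in> A" "Q = Rclass UNIV b" using CX Q by blast
        have "leq_R UNIV a x" using xy(1) a unfolding Rclass_def by simp
        moreover have "leq_R UNIV y b" using xy(2) b unfolding Rclass_def by simp
        ultimately have "leq_R UNIV a b" using xy(3) by (blast intro: leqR_trans)
        hence "leq_R A a b" using K a b by blast
        moreover have "a \<in> g P" "b \<in> g Q" using a b Rclass_mem[of _ UNIV] unfolding g_def by auto
        ultimately show "Rclass_le A (g P) (g Q)" unfolding Rclass_le_def by blast
      qed
      ultimately show "Rclass_le A X' Y' \<or> Rclass_le A Y' X'" using X Y by blast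
    qed
    moreover have "card (g ` C) = card C" using inj by (simp add: card_image)
    ultimately have "g ` C \<in> ?S1" using C by simp
    moreover have "v = enat (card (g ` C))" using C \<open>card (g ` C) = card C\<close> by simp
    ultimately show "v \<in> (\<lambda>C. enat (card C)) ` ?S1" by (rule rev_image_eqI)
  qed
  thus ?thesis unfolding R_height_def by simp
qed

end
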